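(* Let $S=\{s_1,\dots,s_p\}$ and let $F=\{C_1,\dots,C_q\}$ be a family of subsets of $S$ with $q\le p$ and $\bigcup_j C_j=S$. Construct the graph $G$ as follows: vertices $a_1,\dots,a_p$, $b_1,\dots,b_q$, $z_1,\dots,z_p$, $u,v,u'$; edges $a_ib_j$ whenever $s_i\in C_j$, $a_iz_i$ for all $i\in[p]$, $ub_j$ for all $j\in[q]$, and $uv$, $vu'$. Then $G$ is a star-convex bipartite graph with parts $X=\{a_1,\dots,a_p,u,u'\}$ and $Y=\{b_1,\dots,b_q,z_1,\dots,z_p,v\}$ (with respect to the star on $X$ centred at $u$), and for every nonnegative integer $t$, $S$ has a cover of size at most $t$ if and only if $G$ has a vertex-edge dominating set of size at most $t+1$.
   Context: A cover of $S$ in the set system $(S,F)$ is a subfamily $C\subseteq F$ whose union is $S$. A vertex-edge dominating set of a graph $G$ is a set $D\subseteq V(G)$ such that for every edge $uv$, $(N_G[u]\cup N_G[v])\cap D\neq\emptyset$, where $N_G[x]$ is the closed neighbourhood of $x$. A star is a tree with exactly one non-pendant vertex. A bipartite graph $G=(X\cup Y,E)$ is star-convex if there is a star $T$ with vertex set $X$ such that for every $y\in Y$, $N_G(y)$ induces a subtree of $T$. *)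

theory Defs
  imports Main
begin

definition graph :: "'v set \<Rightarrow> 'v set set \<Rightarrow> bool" where
  "graph V E \<longleftrightarrow> finite V \<and> (\<forall>e\<in>E. e \<subseteq> V \<and> card e = 2)"

definition adj :: "'v set set \<Rightarrow> 'v \<Rightarrow> 'v \<Rightarrow> bool" where
  "adj E x y \<longleftrightarrow> {x, y} \<in> E \<and> x \<noteq> y"

definition nbhd :: "'v set set \<Rightarrow> 'v \<Rightarrow> 'v set" where
  "nbhd E x = {y. adj E x y}"

definition closed_nbhd :: "'v set set \<Rightarrow> 'v \<Rightarrow> 'v set" where
  "closed_nbhd E x = insert x (nbhd E x)"

definition degree :: "'v set set \<Rightarrow> 'v \<Rightarrow> nat" where
  "degree E x = card (nbhd E x)"

definition connected_graph :: "'v set \<Rightarrow> 'v set set \<Rightarrow> bool" where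
  "connected_graph V E \<longleftrightarrow>
     (\<forall>x\<in>V. \<forall>y\<in>V. (x, y) \<in> {(a, b). adj E a b}\<^sup>*)"

definition is_tree :: "'v set \<Rightarrow> 'v set set \<Rightarrow> bool" where
  "is_tree V E \<longleftrightarrow> graph V E \<and> V \<noteq> {} \<and> connected_graph V E \<and> card E = card V - 1"

definition is_star :: "'v set \<Rightarrow> 'v set set \<Rightarrow> bool" where
  "is_star V E \<longleftrightarrow> is_tree V E \<and> (\<exists>!c. c \<in> V \<and> degree E c \<noteq> 1)"

definition induced_edges :: "'v set set \<Rightarrow> 'v set \<Rightarrow> 'v set set" where
  "induced_edges E W = {e \<in> E. e \<subseteq> W}"

definition bipartite_parts :: "'v set \<Rightarrow> 'v set set \<Rightarrow> 'v set \<Rightarrow> 'v set \<Rightarrow> bool" where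
  "bipartite_parts V E X Y \<longleftrightarrow> graph V E \<and> X \<inter> Y = {} \<and> X \<union> Y = V \<and>
     (\<forall>e\<in>E. \<exists>x\<in>X. \<exists>y\<in>Y. e = {x, y})"

definition star_convex_wrt ::
  "'v set \<Rightarrow> 'v set set \<Rightarrow> 'v set \<Rightarrow> 'v set \<Rightarrow> 'v set set \<Rightarrow> bool" where
  "star_convex_wrt V E X Y T \<longleftrightarrow> bipartite_parts V E X Y \<and> is_star X T \<and>
     (\<forall>y\<in>Y. is_tree (nbhd E y) (induced_edges T (nbhd E y)))"

definition star_convex_bipartite :: "'v set \<Rightarrow> 'v set set \<Rightarrow> 'v set \<Rightarrow> 'v set \<Rightarrow> bool" where
  "star_convex_bipartite V E X Y \<longleftrightarrow> (\<exists>T. star_convex_wrt V E X Y T)"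

definition ve_dominating :: "'v set \<Rightarrow> 'v set set \<Rightarrow> 'v set \<Rightarrow> bool" where
  "ve_dominating V E D \<longleftrightarrow> D \<subseteq> V \<and>
     (\<forall>x y. {x, y} \<in> E \<longrightarrow> (closed_nbhd E x \<union> closed_nbhd E y) \<inter> D \<noteq> {})"

definition is_cover :: "'a set \<Rightarrow> 'a set set \<Rightarrow> 'a set set \<Rightarrow> bool" where
  "is_cover S F Cv \<longleftrightarrow> Cv \<subseteq> F \<and> \<Union>Cv = S"

text \<open>The constructed graph. Elements s_i of S are identified with i \<in> {1..p},
  sets C_j are given by C j for j \<in> {1..q}.\<close>
datatype vtx = A nat | B nat | Z nat | U | Vv | U'

definition red_V :: "nat \<Rightarrow> nat \<Rightarrow> vtx set" where
  "red_V p q = A ` {1..p} \<union> B ` {1..q} \<union> Z ` {1..p} \<union> {U, Vv, U'}"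

definition red_E :: "nat \<Rightarrow> nat \<Rightarrow> (nat \<Rightarrow> nat set) \<Rightarrow> vtx set set" where
  "red_E p q C =
     {{A i, B j} | i j. i \<in> {1..p} \<and> j \<in> {1..q} \<and> i \<in> C j}
   \<union> {{A i, Z i} | i. i \<in> {1..p}}
   \<union> {{U, B j} | j. j \<in> {1..q}}
   \<union> {{U, Vv}, {Vv, U'}}"

definition red_X :: "nat \<Rightarrow> vtx set" where
  "red_X p = A ` {1..p} \<union> {U, U'}"

definition red_Y :: "nat \<Rightarrow> nat \<Rightarrow> vtx set" where
  "red_Y p q = B ` {1..q} \<union> Z ` {1..p} \<union> {Vv}"

definition red_T :: "nat \<Rightarrow> vtx set set" where
  "red_T p = {{U, x} | x. x \<in> red_X p \<and> x \<noteq> U}"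

end

theory Submission
  imports Defs
begin

definition star_edges :: "'v \<Rightarrow> 'v set \<Rightarrow> 'v set set" where
  "star_edges c W = {{c,x}|x. x\<in>W \<and> x\<noteq>c}"

lemma star_edges_img: "star_edges c W = (\<lambda>x. {c,x}) ` (W - {c})"
  unfolding star_edges_def by auto

lemma adj_star: "adj (star_edges c W) x y \<longleftrightarrow> x \<noteq> y \<and> ((x = c \<and> y \<in> W \<and> y \<noteq> c) \<or> (y = c \<and> x \<in> W \<and> x \<noteq> c))"
  unfolding adj_def star_edges_def by (auto simp: doubleton_eq_iff)

lemma star_tree:
  assumes "finite W" "c \<in> W"
  shows "is_tree W (star_edges c W)"
proof -
  have g: "graph W (star_edges c W)"
    unfolding graph_def star_edges_def using assms by auto
  let ?R = "{(a, b). adj (star_edges c W) a b}"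
  have tc: "(x, c) \<in> ?R\<^sup>*" if "x \<in> W" for x
    using that by (cases "x = c") (auto simp: adj_star intro: r_into_rtrancl)
  have ct: "(c, x) \<in> ?R\<^sup>*" if "x \<in> W" for x
    using that by (cases "x = c") (auto simp: adj_star intro: r_into_rtrancl)
  have con: "connected_graph W (star_edges c W)"
    unfolding connected_graph_def using tc ct by (meson rtrancl_trans)
  have inj: "inj_on (\<lambda>x. {c,x}) (W - {c})"
    by (auto simp: inj_on_def doubleton_eq_iff)
  have "card (star_edges c W) = card W - 1"
    unfolding star_edges_img using card_image[OF inj] assms by simp
  then show ?thesis unfolding is_tree_def using g con assms by auto
qed

lemma star_is_star:
  assumes "finite W" "c \<in> W" "card W \<ge> 3"
  shows "is_star W (star_edges c W)"
proof -
  have n1: "nbhd (star_edges c W) x = {c}" if "x \<in> W" "x \<noteq> c" for x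
    using that assms unfolding nbhd_def by (auto simp: adj_star)
  have nc: "nbhd (star_edges c W) c = W - {c}"
    using assms unfolding nbhd_def by (auto simp: adj_star)
  have "degree (star_edges c W) c \<noteq> 1"
    unfolding degree_def nc using assms by simp
  moreover have "degree (star_edges c W) x = 1" if "x \<in> W" "x \<noteq> c" for x
    unfolding degree_def using n1[OF that] by simp
  ultimately show ?thesis unfolding is_star_def using star_tree[OF assms(1,2)] assms(2)
    by metis
qed

lemma induced_star:
  assumes "W' \<subseteq> W" "c \<in> W'"
  shows "induced_edges (star_edges c W) W' = star_edges c W'"
  using assms unfolding induced_edges_def star_edges_def by auto

lemma single_tree: "is_tree {a} {}"
  unfolding is_tree_def graph_def connected_graph_def by auto

lemma redT: "red_T p = star_edges U (red_X p)"
  unfolding red_T_def star_edges_def by auto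

lemma adj_Vv: "adj (red_E p q C) Vv y \<Longrightarrow> y = U \<or> y = U'"
  unfolding adj_def red_E_def by (auto simp: doubleton_eq_iff)
lemma adj_U': "adj (red_E p q C) U' y \<Longrightarrow> y = Vv"
  unfolding adj_def red_E_def by (auto simp: doubleton_eq_iff)
lemma adj_Z: "adj (red_E p q C) (Z i) y \<Longrightarrow> y = A i"
  unfolding adj_def red_E_def by (auto simp: doubleton_eq_iff)
lemma adj_A: "adj (red_E p q C) (A i) y \<Longrightarrow> y = Z i \<or> (\<exists>j\<in>{1..q}. y = B j \<and> i \<in> C j)"
  unfolding adj_def red_E_def by (auto simp: doubleton_eq_iff)
lemma adj_B: "adj (red_E p q C) (B j) y \<longleftrightarrow> j \<in> {1..q} \<and> (y = U \<or> (\<exists>i\<in>{1..p}. y = A i \<and> i \<in> C j))"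
  unfolding adj_def red_E_def by (auto simp: doubleton_eq_iff)
lemma adj_Z2: "i \<in> {1..p} \<Longrightarrow> adj (red_E p q C) (Z i) (A i)"
  unfolding adj_def red_E_def by (auto simp: doubleton_eq_iff)
lemma adj_Vv2: "adj (red_E p q C) Vv y \<longleftrightarrow> y = U \<or> y = U'"
  unfolding adj_def red_E_def by (auto simp: doubleton_eq_iff)
lemma adj_AB: "i \<in> {1..p} \<Longrightarrow> j \<in> {1..q} \<Longrightarrow> i \<in> C j \<Longrightarrow> adj (red_E p q C) (A i) (B j)"
  unfolding adj_def red_E_def by (auto simp: doubleton_eq_iff)
lemma adj_AZ: "i \<in> {1..p} \<Longrightarrow> adj (red_E p q C) (A i) (Z i)"
  unfolding adj_def red_E_def by (auto simp: doubleton_eq_iff)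
lemma adj_UVv: "adj (red_E p q C) U Vv"
  unfolding adj_def red_E_def by (auto simp: doubleton_eq_iff)

lemma edge_cases: "{x,y} \<in> red_E p q C \<Longrightarrow>
   (\<exists>i\<in>{1..p}. x = A i \<or> y = A i) \<or> x \<in> {U,Vv} \<or> y \<in> {U,Vv}"
  unfolding red_E_def by (auto simp: doubleton_eq_iff)

lemma edge_Vv: "{Vv, U'} \<in> red_E p q C"
  unfolding red_E_def by auto
lemma edge_AZ: "i \<in> {1..p} \<Longrightarrow> {A i, Z i} \<in> red_E p q C"
  unfolding red_E_def by auto

lemma finite_V: "finite (red_V p q)"
  unfolding red_V_def by auto

lemma card_X: "card (red_X p) = p + 2"
proof -
  have "card (A ` {1..p}) = p" by (simp add: card_image inj_on_def)
  moreover have "red_X p = insert U (insert U' (A ` {1..p}))" unfolding red_X_def by auto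
  moreover have "U \<notin> A ` {1..p}" "U' \<notin> A ` {1..p}" by auto
  ultimately show ?thesis by simp
qed

theorem lemma3:
  fixes p q :: nat and C :: "nat \<Rightarrow> nat set"
  assumes "p \<ge> 1"
    and "q \<le> p"
    and "\<forall>j\<in>{1..q}. C j \<subseteq> {1..p}"
    and "(\<Union>j\<in>{1..q}. C j) = {1..p}"
  shows "star_convex_wrt (red_V p q) (red_E p q C) (red_X p) (red_Y p q) (red_T p)
       \<and> star_convex_bipartite (red_V p q) (red_E p q C) (red_X p) (red_Y p q)
       \<and> (\<forall>t::nat. (\<exists>Cv. is_cover {1..p} (C ` {1..q}) Cv \<and> card Cv \<le> t)
             \<longleftrightarrow> (\<exists>D. ve_dominating (red_V p q) (red_E p q C) D \<and> card D \<le> t + 1))"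
proof -
  let ?V = "red_V p q" and ?E = "red_E p q C" and ?X = "red_X p" and ?Y = "red_Y p q"
  have g: "graph ?V ?E"
  proof -
    have "e \<subseteq> ?V \<and> card e = 2" if e: "e \<in> ?E" for e
    proof -
      consider (ab) i j where "i \<in> {1..p}" "j \<in> {1..q}" "e = {A i, B j}"
        | (az) i where "i \<in> {1..p}" "e = {A i, Z i}"
        | (ub) j where "j \<in> {1..q}" "e = {U, B j}"
        | (uv) "e = {U, Vv}" | (vu) "e = {Vv, U'}"
        using e unfolding red_E_def by blast
      then show ?thesis by cases (auto simp: red_V_def)
    qed
    then show ?thesis unfolding graph_def using finite_V by blast
  qed
  have bp: "bipartite_parts ?V ?E ?X ?Y"
  proof -
    have "red_X p \<inter> red_Y p q = {}" unfolding red_X_def red_Y_def by auto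
    moreover have "red_X p \<union> red_Y p q = red_V p q" unfolding red_X_def red_Y_def red_V_def by auto
    moreover have "\<exists>x\<in>?X. \<exists>y\<in>?Y. e = {x, y}" if e: "e \<in> ?E" for e
    proof -
      consider (ab) i j where "i \<in> {1..p}" "j \<in> {1..q}" "e = {A i, B j}"
        | (az) i where "i \<in> {1..p}" "e = {A i, Z i}"
        | (ub) j where "j \<in> {1..q}" "e = {U, B j}"
        | (uv) "e = {U, Vv}" | (vu) "e = {Vv, U'}"
        using e unfolding red_E_def by blast
      then show ?thesis
      proof cases
        case ab then show ?thesis unfolding red_X_def red_Y_def by blast
      next
        case az then show ?thesis unfolding red_X_def red_Y_def by blast
      next
        case ub then show ?thesis unfolding red_X_def red_Y_def by blast
      next
        case uv then show ?thesis unfolding red_X_def red_Y_def by blast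
      next
        case vu then show ?thesis unfolding red_X_def red_Y_def by (metis Un_iff insert_commute insertI1 insertI2)
      qed
    qed
    ultimately show ?thesis unfolding bipartite_parts_def using g by auto
  qed
  have finX: "finite ?X" unfolding red_X_def by auto
  have st: "is_star ?X (red_T p)"
    unfolding redT using star_is_star[OF finX, of U] card_X[of p] assms(1)
    unfolding red_X_def by auto
  have trees: "is_tree (nbhd ?E y) (induced_edges (red_T p) (nbhd ?E y))" if yY: "y \<in> ?Y" for y
  proof -
    consider (b) j where "j \<in> {1..q}" "y = B j" | (z) i where "i \<in> {1..p}" "y = Z i" | (v) "y = Vv"
      using yY unfolding red_Y_def by auto
    then show ?thesis
    proof cases
      case b
      have "nbhd ?E y = insert U (A ` C j)"
        proof -
        have "C j \<subseteq> {1..p}" using b(1) assms(3) by blast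
        then show ?thesis unfolding nbhd_def b(2) adj_B using b(1) by auto
      qed
      moreover have "insert U (A ` C j) \<subseteq> ?X"
      proof -
        have "C j \<subseteq> {1..p}" using b(1) assms(3) by blast
        then have "A ` C j \<subseteq> A ` {1..p}" by (rule image_mono)
        then show ?thesis unfolding red_X_def by blast
      qed
      moreover have "finite (insert U (A ` C j))"
      proof -
        have "C j \<subseteq> {1..p}" using b(1) assms(3) by blast
        then have "finite (C j)" using finite_subset by blast
        then show ?thesis by simp
      qed
      ultimately show ?thesis unfolding redT
        by (simp add: induced_star star_tree)
    next
      case z
      have "nbhd ?E y = {A i}"
        unfolding nbhd_def z(2) using adj_Z adj_Z2[OF z(1)] by blast
      moreover have "induced_edges (red_T p) {A i} = {}"
        unfolding induced_edges_def red_T_def by auto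
      ultimately show ?thesis using single_tree by simp
    next
      case v
      have "nbhd ?E y = {U, U'}"
        unfolding nbhd_def v adj_Vv2 by auto
      moreover have "{U, U'} \<subseteq> ?X" unfolding red_X_def by auto
      ultimately show ?thesis unfolding redT
        by (simp add: induced_star star_tree)
    qed
  qed
  have scw: "star_convex_wrt ?V ?E ?X ?Y (red_T p)"
    unfolding star_convex_wrt_def using bp st trees by blast
  have eq: "(\<exists>Cv. is_cover {1..p} (C ` {1..q}) Cv \<and> card Cv \<le> t)
             \<longleftrightarrow> (\<exists>D. ve_dominating ?V ?E D \<and> card D \<le> t + 1)" for t
  proof
    assume "\<exists>Cv. is_cover {1..p} (C ` {1..q}) Cv \<and> card Cv \<le> t"
    then obtain Cv where cv: "Cv \<subseteq> C ` {1..q}" "\<Union>Cv = {1..p}" "card Cv \<le> t"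
      unfolding is_cover_def by blast
    have finCv: "finite Cv" using cv(1) finite_subset by blast
    define g where "g c = (SOME j. j \<in> {1..q} \<and> C j = c)" for c
    have gp: "g c \<in> {1..q} \<and> C (g c) = c" if "c \<in> Cv" for c
    proof -
      have "\<exists>j. j \<in> {1..q} \<and> C j = c" using cv(1) that by blast
      from someI_ex[OF this] show ?thesis unfolding g_def .
    qed
    define D where "D = insert Vv (B ` g ` Cv)"
    have cardD: "card D \<le> t + 1"
    proof -
      have "finite (B ` g ` Cv)" using finCv by simp
      then have "card D \<le> Suc (card (B ` g ` Cv))" unfolding D_def by (simp add: card_insert_if)
      also have "card (B ` g ` Cv) \<le> card Cv"
        by (meson card_image_le finCv finite_imageI le_trans)
      finally show ?thesis using cv(3) by simp
    qed
    have "g ` Cv \<subseteq> {1..q}" using gp by blast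
    then have "B ` g ` Cv \<subseteq> B ` {1..q}" by (rule image_mono)
    then have DV: "D \<subseteq> ?V" unfolding D_def red_V_def by blast
    have domA: "closed_nbhd ?E (A i) \<inter> D \<noteq> {}" if "i \<in> {1..p}" for i
    proof -
      have "i \<in> \<Union>Cv" using cv(2) that by simp
      then obtain c where c: "c \<in> Cv" "i \<in> c" by blast
      have "adj ?E (A i) (B (g c))" using adj_AB[OF that, of "g c" q C] gp[OF c(1)] c(2) by auto
      moreover have "B (g c) \<in> D" unfolding D_def using c by auto
      ultimately show ?thesis unfolding closed_nbhd_def nbhd_def by auto
    qed
    have domU: "closed_nbhd ?E U \<inter> D \<noteq> {}" "closed_nbhd ?E Vv \<inter> D \<noteq> {}"
    proof -
      have "Vv \<in> closed_nbhd ?E U" using adj_UVv[of p q C] unfolding closed_nbhd_def nbhd_def by blast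
      moreover have "Vv \<in> closed_nbhd ?E Vv" unfolding closed_nbhd_def by blast
      moreover have "Vv \<in> D" unfolding D_def by blast
      ultimately show "closed_nbhd ?E U \<inter> D \<noteq> {}" "closed_nbhd ?E Vv \<inter> D \<noteq> {}" by blast+
    qed
    have "ve_dominating ?V ?E D"
      unfolding ve_dominating_def
    proof (intro conjI DV allI impI)
      fix x y assume "{x,y} \<in> ?E"
      from edge_cases[OF this] show "(closed_nbhd ?E x \<union> closed_nbhd ?E y) \<inter> D \<noteq> {}"
        using domA domU by blast
    qed
    then show "\<exists>D. ve_dominating ?V ?E D \<and> card D \<le> t + 1" using cardD by blast
  next
    assume "\<exists>D. ve_dominating ?V ?E D \<and> card D \<le> t + 1"
    then obtain D where D: "ve_dominating ?V ?E D" "card D \<le> t + 1" by blast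
    have DV: "D \<subseteq> ?V" and dom: "\<And>x y. {x,y} \<in> ?E \<Longrightarrow> (closed_nbhd ?E x \<union> closed_nbhd ?E y) \<inter> D \<noteq> {}"
      using D(1) unfolding ve_dominating_def by auto
    have finD: "finite D" using DV finite_V finite_subset by blast
    obtain w where w: "w \<in> D" "w \<in> {U, Vv, U'}"
    proof -
      have "(closed_nbhd ?E Vv \<union> closed_nbhd ?E U') \<inter> D \<noteq> {}" using dom[OF edge_Vv] .
      moreover have "closed_nbhd ?E Vv \<union> closed_nbhd ?E U' \<subseteq> {U, Vv, U'}"
        unfolding closed_nbhd_def nbhd_def using adj_Vv adj_U' by blast
      ultimately show ?thesis using that by blast
    qed
    define h where "h i = (SOME j. j \<in> {1..q} \<and> i \<in> C j)" for i
    have hp: "h i \<in> {1..q} \<and> i \<in> C (h i)" if "i \<in> {1..p}" for i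
    proof -
      have "i \<in> (\<Union>j\<in>{1..q}. C j)" using assms(4) that by simp
      then have "\<exists>j. j \<in> {1..q} \<and> i \<in> C j" by blast
      from someI_ex[OF this] show ?thesis unfolding h_def .
    qed
    define f where "f v = (case v of A i \<Rightarrow> C (h i) | Z i \<Rightarrow> C (h i) | B j \<Rightarrow> C j | _ \<Rightarrow> {})" for v
    define D' where "D' = D \<inter> (A ` {1..p} \<union> B ` {1..q} \<union> Z ` {1..p})"
    define Cv where "Cv = f ` D'"
    have "D' \<subset> D" unfolding D'_def using w by auto
    then have "card D' < card D" using finD psubset_card_mono by blast
    moreover have "finite D'" unfolding D'_def using finD by simp
    then have "card Cv \<le> card D'" unfolding Cv_def by (rule card_image_le)
    ultimately have c1: "card Cv \<le> t" using D(2) by linarith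
    have "f v \<in> C ` {1..q}" if v: "v \<in> D'" for v
    proof -
      consider (a) i where "i \<in> {1..p}" "v = A i" | (b) j where "j \<in> {1..q}" "v = B j"
        | (z) i where "i \<in> {1..p}" "v = Z i"
        using v unfolding D'_def by blast
      then show ?thesis
      proof cases
        case a then show ?thesis unfolding f_def using hp[OF a(1)] by simp
      next
        case b then show ?thesis unfolding f_def by simp
      next
        case z then show ?thesis unfolding f_def using hp[OF z(1)] by simp
      qed
    qed
    then have sub: "Cv \<subseteq> C ` {1..q}" unfolding Cv_def by blast
    have un1: "\<Union>Cv \<subseteq> {1..p}"
    proof
      fix x assume "x \<in> \<Union>Cv"
      then obtain j where "j \<in> {1..q}" "x \<in> C j" using sub by blast
      then show "x \<in> {1..p}" using assms(3) by blast
    qed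
    have un2: "i \<in> \<Union>Cv" if i: "i \<in> {1..p}" for i
    proof -
      have "(closed_nbhd ?E (A i) \<union> closed_nbhd ?E (Z i)) \<inter> D \<noteq> {}" using dom[OF edge_AZ[OF i]] .
      then obtain d where d0: "d \<in> D" "d \<in> closed_nbhd ?E (A i) \<union> closed_nbhd ?E (Z i)" by blast
      from d0(2) consider "d = A i" | "adj ?E (A i) d" | "d = Z i" | "adj ?E (Z i) d"
        unfolding closed_nbhd_def nbhd_def by blast
      then have d2: "d = A i \<or> d = Z i \<or> (\<exists>j\<in>{1..q}. d = B j \<and> i \<in> C j)"
        by cases (auto dest: adj_A adj_Z)
      have d: "d \<in> D" "d \<in> {A i, Z i} \<union> {B j | j. j \<in> {1..q} \<and> i \<in> C j}"
        using d0(1) d2 by blast+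
      have "d \<in> A ` {1..p} \<union> B ` {1..q} \<union> Z ` {1..p}" using d2 i by blast
      then have "d \<in> D'" unfolding D'_def using d0(1) by blast
      moreover have "i \<in> f d" using d(2) hp[OF i] unfolding f_def by auto
      ultimately show ?thesis unfolding Cv_def by blast
    qed
    have "is_cover {1..p} (C ` {1..q}) Cv" unfolding is_cover_def using sub un1 un2 by blast
    then show "\<exists>Cv. is_cover {1..p} (C ` {1..q}) Cv \<and> card Cv \<le> t" using c1 by blast
  qed
  show ?thesis using scw eq unfolding star_convex_bipartite_def by blast
qed

end
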